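(* Let $(S_n^{(1)},S_n^{(2)})_{n\ge0}$ be a two-elephant walking model and let $\hat\beta_n:=\frac{2}{n(n-1)}$ for $n\ge2$. (i) If $\alpha_1=\alpha_2=-1$ (so $\lambda_\alpha=-1$, $r_\alpha=1$), then $(x_n)_{n\ge1}$ is a bounded martingale with respect to $(\mathcal F_n)$ and hence converges almost surely; moreover for $n\ge2$, $$y_n=\hat\beta_n\Big(y_2+\sum_{j=2}^{n-1}j\,\varepsilon^{(y)}_{j+1}\Big).$$ (ii) If $\alpha_1=\alpha_2=1$ (so $\lambda_\alpha=1$, $r_\alpha=1$), then $(y_n)_{n\ge1}$ is a bounded martingale with respect to $(\mathcal F_n)$ and hence converges almost surely; moreover for $n\ge2$, $$x_n=\hat\beta_n\Big(x_2+\sum_{j=2}^{n-1}j\,\varepsilon^{(x)}_{j+1}\Big).$$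
   Context: Two-elephant walking model: fix $p_1,p_2\in[0,1]$, $\alpha_i=2p_i-1$. Let $(\xi_n^{(1)})_{n\ge2}$ be i.i.d. Bernoulli($p_1$), $(\xi_n^{(2)})_{n\ge2}$ i.i.d. Bernoulli($p_2$), $(u_n^{(1)})_{n\ge1}$, $(u_n^{(2)})_{n\ge1}$ independent with $u_n^{(i)}$ uniform on $\{1,\dots,n\}$, all mutually independent. $S_0^{(i)}=0$, $X_1^{(1)},X_1^{(2)}\in\{-1,1\}$ given, and for $n\ge1$: $X_{n+1}^{(1)}:=(2\xi^{(1)}_{n+1}-1)X^{(2)}_{u_n^{(2)}}$, $X_{n+1}^{(2)}:=(2\xi^{(2)}_{n+1}-1)X^{(1)}_{u_n^{(1)}}$, $S_n^{(i)}=\sum_{k\le n}X_k^{(i)}$; $\mathcal F_n:=\sigma(X_j^{(i)}:1\le j\le n,\ i=1,2)$. With $\lambda_\alpha:=\operatorname{sgn}(\alpha_2)\sqrt{\alpha_1\alpha_2}$ and $r_\alpha:=\sqrt{\alpha_1/\alpha_2}$ (here $\alpha_1\alpha_2>0$): $x_n:=\frac{S_n^{(1)}-r_\alpha S_n^{(2)}}{n}$, $y_n:=\frac{S_n^{(1)}+r_\alpha S_n^{(2)}}{n}$, and for $j\ge1$, whenever the denominators are nonzero, $$\varepsilon^{(x)}_{j+1}:=\frac{1}{1+\lambda_\alpha}\big(X^{(1)}_{j+1}-r_\alpha X^{(2)}_{j+1}+\lambda_\alpha x_j\big),\qquad \varepsilon^{(y)}_{j+1}:=\frac{1}{1-\lambda_\alpha}\big(X^{(1)}_{j+1}+r_\alpha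 X^{(2)}_{j+1}-\lambda_\alpha y_j\big).$$ *)

theory Defs
  imports "HOL-Probability.Probability"
begin

text \<open>Elephants are indexed by 1 and 2 (the partner of i is 3 - i).
  e i n : the Bernoulli variable xi_n^(i) (True means 1);
  v i n : the uniform index u_n^(i);
  a i   : the given first step X_1^(i).
  The index v i n is clamped to {1..n}; this only matters on a null set,
  since u_n^(i) is uniform on {1..n}.\<close>

fun ew :: "(nat \<Rightarrow> nat \<Rightarrow> bool) \<Rightarrow> (nat \<Rightarrow> nat \<Rightarrow> nat) \<Rightarrow> (nat \<Rightarrow> real) \<Rightarrow> nat \<Rightarrow> nat \<Rightarrow> real" where
  "ew e v a i 0 = 0"
| "ew e v a i (Suc 0) = a i"
| "ew e v a i (Suc (Suc m)) =
     (2 * of_bool (e i (Suc (Suc m))) - 1) *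
     ew e v a (3 - i) (max 1 (min (v (3 - i) (Suc m)) (Suc m)))"

definition lam_alpha :: "real \<Rightarrow> real \<Rightarrow> real" where
  "lam_alpha a1 a2 = sgn a2 * sqrt (a1 * a2)"

definition r_alpha :: "real \<Rightarrow> real \<Rightarrow> real" where
  "r_alpha a1 a2 = sqrt (a1 / a2)"

definition martingale_wrt :: "'a measure \<Rightarrow> (nat \<Rightarrow> 'a measure) \<Rightarrow> (nat \<Rightarrow> 'a \<Rightarrow> real) \<Rightarrow> bool" where
  "martingale_wrt M F X \<longleftrightarrow>
     (\<forall>n\<ge>1. subalgebra M (F n) \<and> sets (F n) \<subseteq> sets (F (Suc n)) \<and>
            X n \<in> borel_measurable (F n) \<and> integrable M (X n) \<and>
            (AE \<omega> in M. real_cond_exp M (F n) (X (Suc n)) \<omega> = X n \<omega>))"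

end

theory Submission
  imports Defs
begin

lemma beta_identity:
  fixes T D :: "nat \<Rightarrow> real"
  assumes TD: "\<And>n. T (Suc n) = T n + D (Suc n)"
  shows "n \<ge> 2 \<Longrightarrow> T n / real n = 2 / (real n * (real n - 1)) *
           (T 2 / 2 + (\<Sum>j=2..n-1. real j * (1 / 2 * (D (Suc j) + T j / real j))))"
proof (induction n rule: nat_induct_at_least)
  case base
  then show ?case by simp
next
  case (Suc n)
  have e: "{2..Suc n - 1} = insert n {2..n-1}" using Suc by auto
  have fin: "n \<notin> {2..n-1}" by auto
  have IH: "T 2 / 2 + (\<Sum>j=2..n-1. real j * (1 / 2 * (D (Suc j) + T j / real j))) = real n * (real n - 1) / 2 * (T n / real n)"
    using Suc.IH Suc.hyps by (simp add: field_simps)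
  have n0: "real n \<noteq> 0" "real n - 1 \<noteq> 0" using Suc.hyps by auto
  have key: "\<And>A::real. T 2 / 2 + A = real n * (real n - 1) / 2 * (T n / real n) \<Longrightarrow>
     (T n + D (Suc n)) / (real n + 1) = 2 / ((real n + 1) * real n) *
           (T 2 / 2 + (real n * (1 / 2 * (D (Suc n) + T n / real n)) + A))"
  proof -
    fix A :: real assume h: "T 2 / 2 + A = real n * (real n - 1) / 2 * (T n / real n)"
    have "T 2 / 2 + (real n * (1 / 2 * (D (Suc n) + T n / real n)) + A)
        = real n * (1 / 2 * (D (Suc n) + T n / real n)) + real n * (real n - 1) / 2 * (T n / real n)"
      using h by linarith
    also have "\<dots> = real n / 2 * (T n + D (Suc n))" using n0 by (simp add: field_simps)
    finally have eq: "T 2 / 2 + (real n * (1 / 2 * (D (Suc n) + T n / real n)) + A) = real n / 2 * (T n + D (Suc n))" .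
    show "(T n + D (Suc n)) / (real n + 1) = 2 / ((real n + 1) * real n) *
           (T 2 / 2 + (real n * (1 / 2 * (D (Suc n) + T n / real n)) + A))"
      unfolding eq using n0 by (simp add: divide_simps) (simp add: algebra_simps)
  qed
  show ?case
    unfolding e sum.insert[OF finite_atLeastAtMost fin] using key[OF IH]
    by (simp add: TD add.commute)
qed

definition Jset :: "nat \<Rightarrow> (bool \<times> nat \<times> nat) set" where
  "Jset m = ({True} \<times> {1,2} \<times> {2..m}) \<union> ({False} \<times> {1,2} \<times> {1..m-1})"

definition Iset :: "(bool \<times> nat \<times> nat) set" where
  "Iset = ({True} \<times> {1,2} \<times> {2..}) \<union> ({False} \<times> {1,2} \<times> {1..})"

locale TE = prob_space M for M :: "'a measure" +
  fixes xi :: "nat \<Rightarrow> nat \<Rightarrow> 'a \<Rightarrow> bool" and u :: "nat \<Rightarrow> nat \<Rightarrow> 'a \<Rightarrow> nat"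
    and a :: "nat \<Rightarrow> real"
    and X :: "nat \<Rightarrow> nat \<Rightarrow> 'a \<Rightarrow> real" and S :: "nat \<Rightarrow> nat \<Rightarrow> 'a \<Rightarrow> real"
    and F :: "nat \<Rightarrow> 'a measure" and s :: real
  assumes s: "s = 1 \<or> s = -1"
    and a: "\<forall>i\<in>{1,2}. a i \<in> {-1, 1}"
    and indep: "indep_vars (\<lambda>_. count_space UNIV)
        (\<lambda>k \<omega>. case k of (True, i, n) \<Rightarrow> Inl (xi i n \<omega>) | (False, i, n) \<Rightarrow> Inr (u i n \<omega>))
        (({True} \<times> {1,2} \<times> {2..}) \<union> ({False} \<times> {1,2} \<times> {1..}))"
    and xi_distr: "\<forall>i\<in>{1,2}. \<forall>n\<ge>2.
        distr M (count_space UNIV) (xi i n) = measure_pmf (bernoulli_pmf ((s + 1) / 2))"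
    and u_distr: "\<forall>i\<in>{1,2}. \<forall>n\<ge>1.
        distr M (count_space UNIV) (u i n) = measure_pmf (pmf_of_set {1..n})"
    and X_def: "\<And>i n \<omega>. X i n \<omega> = ew (\<lambda>i n. xi i n \<omega>) (\<lambda>i n. u i n \<omega>) a i n"
    and S_def: "\<And>i n \<omega>. S i n \<omega> = (\<Sum>k=1..n. X i k \<omega>)"
    and F_def: "\<And>n. F n = sigma (space M)
        (\<Union>i\<in>{1,2}. \<Union>j\<in>{1..n}. {X i j -` A \<inter> space M | A. A \<in> sets borel})"
begin

definition V :: "bool \<times> nat \<times> nat \<Rightarrow> 'a \<Rightarrow> bool + nat" where
  "V = (\<lambda>k \<omega>. case k of (True, i, n) \<Rightarrow> Inl (xi i n \<omega>) | (False, i, n) \<Rightarrow> Inr (u i n \<omega>))"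

definition E :: "bool \<times> nat \<times> nat \<Rightarrow> 'a set set" where
  "E k = {V k -` A \<inter> space M | A. A \<in> sets (count_space UNIV)}"

definition N :: "nat \<Rightarrow> 'a measure" where
  "N m = sigma (space M) (\<Union>k\<in>Jset m. E k)"

lemma indepV: "indep_vars (\<lambda>_. count_space UNIV) V Iset"
  using indep unfolding V_def Iset_def .

lemma V_meas: "k \<in> Iset \<Longrightarrow> V k \<in> measurable M (count_space UNIV)"
  using indepV unfolding indep_vars_def2 by auto

lemma xi_V: "xi i n = (\<lambda>\<omega>. case V (True, i, n) \<omega> of Inl b \<Rightarrow> b | Inr _ \<Rightarrow> False)"
  by (simp add: V_def)

lemma u_V: "u i n = (\<lambda>\<omega>. case V (False, i, n) \<omega> of Inl _ \<Rightarrow> 0 | Inr k \<Rightarrow> k)"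
  by (simp add: V_def)

lemma xi_meas: "i \<in> {1,2} \<Longrightarrow> 2 \<le> n \<Longrightarrow> xi i n \<in> measurable M (count_space UNIV)"
proof -
  assume "i \<in> {1,2}" "2 \<le> n"
  then have "(True, i, n) \<in> Iset" by (simp add: Iset_def)
  then show ?thesis by (subst xi_V, rule measurable_compose[OF V_meas]) simp
qed

lemma u_meas: "i \<in> {1,2} \<Longrightarrow> 1 \<le> n \<Longrightarrow> u i n \<in> measurable M (count_space UNIV)"
proof -
  assume "i \<in> {1,2}" "1 \<le> n"
  then have "(False, i, n) \<in> Iset" by (simp add: Iset_def)
  then show ?thesis by (subst u_V, rule measurable_compose[OF V_meas]) simp
qed

lemma E_sub: "E k \<subseteq> Pow (space M)"
  unfolding E_def by auto

lemma space_N[simp]: "space (N m) = space M"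
  unfolding N_def by (rule space_measure_of) (use E_sub in blast)

lemma sets_N: "sets (N m) = sigma_sets (space M) (\<Union>k\<in>Jset m. E k)"
  unfolding N_def by (rule sets_measure_of) (use E_sub in blast)

lemma E_in_N: "k \<in> Jset m \<Longrightarrow> A \<in> E k \<Longrightarrow> A \<in> sets (N m)"
  unfolding sets_N by auto

lemma xi_measN: "i \<in> {1,2} \<Longrightarrow> 2 \<le> n \<Longrightarrow> n \<le> m \<Longrightarrow> xi i n \<in> measurable (N m) (count_space UNIV)"
proof (rule measurableI)
  fix A assume "i \<in> {1,2}" "2 \<le> n" "n \<le> m"
  then have k: "(True, i, n) \<in> Jset m" by (auto simp: Jset_def)
  have "xi i n -` A \<inter> space (N m) = V (True, i, n) -` (Inl ` A) \<inter> space M"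
    by (auto simp: V_def)
  also have "\<dots> \<in> sets (N m)" by (rule E_in_N[OF k]) (auto simp: E_def)
  finally show "xi i n -` A \<inter> space (N m) \<in> sets (N m)" .
qed auto

lemma u_measN: "i \<in> {1,2} \<Longrightarrow> 1 \<le> n \<Longrightarrow> n < m \<Longrightarrow> u i n \<in> measurable (N m) (count_space UNIV)"
proof (rule measurableI)
  fix A assume "i \<in> {1,2}" "1 \<le> n" "n < m"
  then have k: "(False, i, n) \<in> Jset m" by (auto simp: Jset_def)
  have "u i n -` A \<inter> space (N m) = V (False, i, n) -` (Inr ` A) \<inter> space M"
    by (auto simp: V_def)
  also have "\<dots> \<in> sets (N m)" by (rule E_in_N[OF k]) (auto simp: E_def)
  finally show "u i n -` A \<inter> space (N m) \<in> sets (N m)" .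
qed auto

lemma X_rec: "X i (Suc (Suc k)) \<omega> = (2 * of_bool (xi i (Suc (Suc k)) \<omega>) - 1) *
   X (3 - i) (max 1 (min (u (3 - i) (Suc k) \<omega>) (Suc k))) \<omega>"
  by (simp add: X_def)

lemma X_meas_gen:
  assumes xiN: "\<And>i n. i\<in>{1,2} \<Longrightarrow> 2 \<le> n \<Longrightarrow> n \<le> m \<Longrightarrow> xi i n \<in> measurable NN (count_space UNIV)"
   and uN: "\<And>i n. i\<in>{1,2} \<Longrightarrow> 1 \<le> n \<Longrightarrow> n < m \<Longrightarrow> u i n \<in> measurable NN (count_space UNIV)"
  shows "i \<in> {1,2} \<Longrightarrow> j \<le> m \<Longrightarrow> X i j \<in> borel_measurable NN"
proof (induction j arbitrary: i rule: less_induct)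
  case (less j)
  show ?case
  proof (cases j)
    case 0 then show ?thesis by (simp add: X_def)
  next
    case (Suc k) note k = this
    show ?thesis
    proof (cases k)
      case 0 then show ?thesis using k by (simp add: X_def)
    next
      case (Suc l)
      have i3: "3 - i \<in> {1,2}" using less by auto
      have f: "(\<lambda>\<omega>. X (3 - i) (max 1 (min c (Suc l))) \<omega>) \<in> borel_measurable NN" for c
        using less k Suc i3 by (intro less.IH) auto
      have g: "(\<lambda>\<omega>. X (3 - i) (max 1 (min (u (3 - i) (Suc l) \<omega>) (Suc l))) \<omega>) \<in> borel_measurable NN"
        by (rule measurable_compose_countable'[where I=UNIV, OF f]) (use uN[OF i3] less k Suc in auto)
      have h: "(\<lambda>\<omega>. 2 * of_bool (xi i (Suc (Suc l)) \<omega>) - 1 :: real) \<in> borel_measurable NN"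
        by (rule measurable_compose[OF xiN]) (use less k Suc in auto)
      have "X i j = (\<lambda>\<omega>. (2 * of_bool (xi i (Suc (Suc l)) \<omega>) - 1) *
          X (3 - i) (max 1 (min (u (3 - i) (Suc l) \<omega>) (Suc l))) \<omega>)"
        using k Suc by (auto simp: X_rec)
      then show ?thesis using g h by simp
    qed
  qed
qed

lemma X_meas: "i \<in> {1,2} \<Longrightarrow> X i j \<in> borel_measurable M"
  by (rule X_meas_gen[of j]) (auto intro: xi_meas u_meas)

lemma X_measN: "i \<in> {1,2} \<Longrightarrow> j \<le> m \<Longrightarrow> X i j \<in> borel_measurable (N m)"
  by (rule X_meas_gen[of m]) (auto intro: xi_measN u_measN)

end

context TE begin

lemma Jset_Iset: "Jset m \<subseteq> Iset"
  by (auto simp: Jset_def Iset_def)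

lemma E_events: "k \<in> Iset \<Longrightarrow> E k \<subseteq> sets M"
proof
  fix x assume k: "k \<in> Iset" and "x \<in> E k"
  then obtain A where "x = V k -` A \<inter> space M" unfolding E_def by auto
  then show "x \<in> sets M" using measurable_sets[OF V_meas[OF k], of A] by simp
qed

lemma sets_N_sub: "sets (N m) \<subseteq> sets M"
  unfolding sets_N using E_events Jset_Iset by (intro sets.sigma_sets_subset) blast

lemma subalg_N: "subalgebra M (N m)"
  unfolding subalgebra_def using sets_N_sub by simp

lemma E_Int_stable: "Int_stable (E k)"
  unfolding Int_stable_def
proof safe
  fix a b assume "a \<in> E k" "b \<in> E k"
  then obtain A B where "a = V k -` A \<inter> space M" "b = V k -` B \<inter> space M"
    unfolding E_def by auto
  then have "a \<inter> b = V k -` (A \<inter> B) \<inter> space M" by auto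
  moreover have "A \<inter> B \<in> sets (count_space UNIV)" by simp
  ultimately show "a \<inter> b \<in> E k" unfolding E_def by blast
qed

lemma indep_split:
  assumes i: "i \<in> {1,2}" and m: "1 \<le> m"
  shows "indep_set (sigma_sets (space M) (E (False, i, m))) (sets (N m))"
proof -
  define K where "K = (\<lambda>b::bool. if b then {(False, i, m)} else Jset m)"
  have "indep_sets (\<lambda>k. {V k -` A \<inter> space M | A. A \<in> sets (count_space UNIV)}) Iset"
    using indepV unfolding indep_vars_def2 by blast
  then have ind0: "indep_sets E Iset" unfolding E_def[abs_def] .
  have "indep_sets E (\<Union>b. K b)"
    by (rule indep_sets_mono_index[OF _ ind0]) (use i m in \<open>auto simp: K_def Jset_def Iset_def\<close>)
  then have "indep_sets (\<lambda>b. sigma_sets (space M) (\<Union>k\<in>K b. E k)) UNIV"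
    by (rule indep_sets_collect_sigma) (auto simp: E_Int_stable disjoint_family_on_def K_def Jset_def)
  moreover have "(\<lambda>b. sigma_sets (space M) (\<Union>k\<in>K b. E k)) =
      case_bool (sigma_sets (space M) (E (False, i, m))) (sets (N m))"
    by (rule ext) (auto simp: K_def sets_N split: bool.split)
  ultimately show ?thesis unfolding indep_set_def by simp
qed

abbreviation clamp :: "nat \<Rightarrow> nat \<Rightarrow> nat" where
  "clamp m k \<equiv> max 1 (min k m)"

lemma indep_int:
  assumes i: "i \<in> {1,2}" and m: "1 \<le> m" and Z: "Z \<in> borel_measurable (N m)"
    and Zb: "\<And>\<omega>. \<omega> \<in> space M \<Longrightarrow> \<bar>Z \<omega>\<bar> \<le> K"
  shows "(\<integral>\<omega>. indicator {\<omega>\<in>space M. clamp m (u i m \<omega>) = l} \<omega> * Z \<omega> \<partial>M)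
       = prob {\<omega>\<in>space M. clamp m (u i m \<omega>) = l} * (\<integral>\<omega>. Z \<omega> \<partial>M)"
proof -
  define U where "U = (\<lambda>\<omega>. indicator {\<omega>\<in>space M. clamp m (u i m \<omega>) = l} \<omega> :: real)"
  have ZM: "Z \<in> borel_measurable M" by (rule measurable_from_subalg[OF subalg_N Z])
  have Uset: "{\<omega>\<in>space M. clamp m (u i m \<omega>) = l} \<in> sets M"
  proof -
    have "{\<omega>\<in>space M. clamp m (u i m \<omega>) = l} = u i m -` {k. clamp m k = l} \<inter> space M" by auto
    also have "\<dots> \<in> sets M" by (rule measurable_sets[OF u_meas[OF i m]]) simp
    finally show ?thesis .
  qed
  have UM: "U \<in> borel_measurable M" unfolding U_def using Uset by simp
  have intZ: "integrable M Z"
    by (rule integrable_const_bound[where B=K]) (use Zb ZM in auto)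
  have intU: "integrable M U"
    by (rule integrable_const_bound[where B=1]) (use UM in \<open>auto simp: U_def\<close>)
  have "indep_sets (case_bool (sigma_sets (space M) {U -` A \<inter> space M | A. A \<in> sets borel})
                              (sigma_sets (space M) {Z -` A \<inter> space M | A. A \<in> sets borel})) UNIV"
  proof (rule indep_sets_mono_sets[OF indep_split[OF i m, unfolded indep_set_def]])
    fix b :: bool
    show "case_bool (sigma_sets (space M) {U -` A \<inter> space M | A. A \<in> sets borel})
            (sigma_sets (space M) {Z -` A \<inter> space M | A. A \<in> sets borel}) b
          \<subseteq> case_bool (sigma_sets (space M) (E (False, i, m))) (sets (N m)) b"
    proof (cases b)
      case True
      have "{U -` A \<inter> space M | A. A \<in> sets borel} \<subseteq> E (False, i, m)"
      proof safe
        fix A :: "real set"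
        have "U -` A \<inter> space M = V (False, i, m) -` (Inr ` {k. indicator {l} (clamp m k) \<in> A}) \<inter> space M"
          by (auto simp: U_def V_def indicator_def image_iff split: if_splits)
        then show "U -` A \<inter> space M \<in> E (False, i, m)" unfolding E_def by auto
      qed
      then show ?thesis using True by (simp add: sigma_sets_mono')
    next
      case False
      have "{Z -` A \<inter> space M | A. A \<in> sets borel} \<subseteq> sets (N m)"
        using measurable_sets[OF Z] by auto
      then have "sigma_sets (space (N m)) {Z -` A \<inter> space M | A. A \<in> sets borel} \<subseteq> sets (N m)"
        by (subst sigma_sets_le_sets_iff)
      then show ?thesis using False unfolding space_N by simp
    qed
  qed
  then have "indep_var borel U borel Z"
    unfolding indep_var_eq indep_set_def using UM ZM by simp
  then have "(\<integral>\<omega>. U \<omega> * Z \<omega> \<partial>M) = (\<integral>\<omega>. U \<omega> \<partial>M) * (\<integral>\<omega>. Z \<omega> \<partial>M)"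
    by (rule indep_var_lebesgue_integral[OF _ intU intZ])
  moreover have "(\<integral>\<omega>. U \<omega> \<partial>M) = prob {\<omega>\<in>space M. clamp m (u i m \<omega>) = l}"
    unfolding U_def by (simp add: Int_absorb2)
  ultimately show ?thesis unfolding U_def by simp
qed

lemma prob_clamp:
  assumes i: "i \<in> {1,2}" and m: "1 \<le> m" and l: "l \<in> {1..m}"
  shows "prob {\<omega>\<in>space M. clamp m (u i m \<omega>) = l} = 1 / real m"
proof -
  have "{\<omega>\<in>space M. clamp m (u i m \<omega>) = l} = u i m -` {k. clamp m k = l} \<inter> space M" by auto
  then have "prob {\<omega>\<in>space M. clamp m (u i m \<omega>) = l} = measure (distr M (count_space UNIV) (u i m)) {k. clamp m k = l}"
    by (simp add: measure_distr[OF u_meas[OF i m]])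
  also have "\<dots> = measure (measure_pmf (pmf_of_set {1..m})) {k. clamp m k = l}"
  proof -
    have "distr M (count_space UNIV) (u i m) = measure_pmf (pmf_of_set {1..m})" using u_distr i m by blast
    then show ?thesis by simp
  qed
  also have "\<dots> = card ({1..m} \<inter> {k. clamp m k = l}) / card {1..m}"
    using m by (subst measure_pmf_of_set) auto
  also have "{1..m} \<inter> {k. clamp m k = l} = {l}" using l by auto
  finally show ?thesis by simp
qed

lemma xi_AE:
  assumes i: "i \<in> {1,2}" and n: "2 \<le> n"
  shows "AE \<omega> in M. xi i n \<omega> = (s = 1)"
proof -
  have meas: "xi i n -` {\<not> (s = 1)} \<inter> space M \<in> sets M"
    by (rule measurable_sets[OF xi_meas[OF i n]]) simp
  have "emeasure M (xi i n -` {\<not> (s = 1)} \<inter> space M)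
      = emeasure (distr M (count_space UNIV) (xi i n)) {\<not> (s = 1)}"
    by (simp add: emeasure_distr[OF xi_meas[OF i n]])
  also have "\<dots> = emeasure (measure_pmf (bernoulli_pmf ((s + 1) / 2))) {\<not> (s = 1)}"
  proof -
    have "distr M (count_space UNIV) (xi i n) = measure_pmf (bernoulli_pmf ((s + 1) / 2))" using xi_distr i n by blast
    then show ?thesis by simp
  qed
  also have "\<dots> = 0"
    using s by (auto simp: emeasure_pmf_single)
  finally show ?thesis
    by (subst AE_iff_measurable[OF meas]) auto
qed

end

lemma ew_abs:
  assumes a: "\<forall>i\<in>{1,2}. a i \<in> {-1, 1}"
  shows "i \<in> {1,2} \<Longrightarrow> 1 \<le> n \<Longrightarrow> \<bar>ew e v a i n\<bar> = 1"
proof (induction n arbitrary: i rule: less_induct)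
  case (less n)
  show ?case
  proof (cases n)
    case 0 then show ?thesis using less by simp
  next
    case (Suc k) note k = this
    show ?thesis
    proof (cases k)
      case 0 then show ?thesis using less a k by auto
    next
      case (Suc m)
      have "3 - i \<in> {1,2}" using less by auto
      then have "\<bar>ew e v a (3 - i) (max 1 (min (v (3 - i) (Suc m)) (Suc m)))\<bar> = 1"
        using less k Suc by (intro less.IH) auto
      then show ?thesis using k Suc by (simp add: abs_mult)
    qed
  qed
qed

context TE begin

lemma X_bound: "i \<in> {1,2} \<Longrightarrow> \<bar>X i n \<omega>\<bar> \<le> 1"
  using ew_abs[OF a, of i n] by (cases n) (auto simp: X_def)

lemma int_bound: "(f::'a\<Rightarrow>real) \<in> borel_measurable M \<Longrightarrow> (\<And>\<omega>. \<omega> \<in> space M \<Longrightarrow> \<bar>f \<omega>\<bar> \<le> B) \<Longrightarrow> integrable M f"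
  by (rule integrable_const_bound[where B=B]) auto

lemma clamp_set: "i \<in> {1,2} \<Longrightarrow> 1 \<le> m \<Longrightarrow> {\<omega>\<in>space M. clamp m (u i m \<omega>) = l} \<in> sets M"
proof -
  assume i: "i \<in> {1,2}" and m: "1 \<le> m"
  have "{\<omega>\<in>space M. clamp m (u i m \<omega>) = l} = u i m -` {k. clamp m k = l} \<inter> space M" by auto
  also have "\<dots> \<in> sets M" by (rule measurable_sets[OF u_meas[OF i m]]) simp
  finally show ?thesis .
qed

lemma core:
  assumes i: "i \<in> {1,2}" and m: "1 \<le> m" and Z: "Z \<in> borel_measurable (N m)"
    and Zb: "\<And>\<omega>. \<omega> \<in> space M \<Longrightarrow> \<bar>Z \<omega>\<bar> \<le> K"
  shows "(\<integral>\<omega>. X i (Suc m) \<omega> * Z \<omega> \<partial>M) = s / real m * (\<Sum>l=1..m. \<integral>\<omega>. X (3 - i) l \<omega> * Z \<omega> \<partial>M)"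
proof -
  obtain k where k: "m = Suc k" using m by (cases m) auto
  have i3: "3 - i \<in> {1,2}" using i by auto
  have ZM: "Z \<in> borel_measurable M" by (rule measurable_from_subalg[OF subalg_N Z])
  let ?I = "\<lambda>l \<omega>. indicator {\<omega>\<in>space M. clamp m (u (3 - i) m \<omega>) = l} \<omega> :: real"
  have pw: "X (3 - i) (clamp m (u (3 - i) m \<omega>)) \<omega> = (\<Sum>l=1..m. ?I l \<omega> * X (3 - i) l \<omega>)"
    if \<omega>: "\<omega> \<in> space M" for \<omega>
  proof -
    have "(\<Sum>l=1..m. ?I l \<omega> * X (3 - i) l \<omega>) = (\<Sum>l\<in>{1..m}. if clamp m (u (3 - i) m \<omega>) = l then X (3 - i) l \<omega> else 0)"
      using \<omega> by (intro sum.cong) (auto simp: indicator_def)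
    also have "\<dots> = X (3 - i) (clamp m (u (3 - i) m \<omega>)) \<omega>"
      using m by (simp add: sum.delta')
    finally show ?thesis by simp
  qed
  have sv: "2 * of_bool (s = 1) - 1 = s" using s by auto
  have AE1: "AE \<omega> in M. X i (Suc m) \<omega> * Z \<omega> = s * (\<Sum>l=1..m. ?I l \<omega> * (X (3 - i) l \<omega> * Z \<omega>))"
    using xi_AE[OF i, of "Suc m"] m
  proof -
    have n2: "2 \<le> Suc m" using m by simp
    show ?thesis using xi_AE[OF i n2] AE_space
  proof (eventually_elim)
    case (elim \<omega>)
    have "X i (Suc m) \<omega> = s * X (3 - i) (clamp m (u (3 - i) m \<omega>)) \<omega>"
      using X_rec[of i k \<omega>] elim k sv by simp
    then have "X i (Suc m) \<omega> * Z \<omega> = s * (\<Sum>l=1..m. ?I l \<omega> * X (3 - i) l \<omega>) * Z \<omega>"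
      using pw[of \<omega>] elim by simp
    also have "\<dots> = s * (\<Sum>l=1..m. ?I l \<omega> * (X (3 - i) l \<omega> * Z \<omega>))"
      by (simp add: sum_distrib_right mult.assoc)
    finally show ?case .
  qed
  qed
  have Xm[measurable]: "X (3 - i) l \<in> borel_measurable M" for l using X_meas[OF i3] .
  have Xim[measurable]: "X i (Suc m) \<in> borel_measurable M" using X_meas[OF i] .
  have Zm[measurable]: "Z \<in> borel_measurable M" using ZM .
  have Cs[measurable]: "{\<omega>\<in>space M. clamp m (u (3 - i) m \<omega>) = l} \<in> sets M" for l
    using clamp_set[OF i3 m] .
  have XZb: "\<bar>X (3 - i) l \<omega> * Z \<omega>\<bar> \<le> K" if "\<omega> \<in> space M" for l \<omega>
  proof -
    have "\<bar>X (3 - i) l \<omega>\<bar> * \<bar>Z \<omega>\<bar> \<le> 1 * K"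
      by (rule mult_mono) (use X_bound[OF i3] Zb[OF that] in auto)
    then show ?thesis by (simp add: abs_mult)
  qed
  have XZN: "(\<lambda>\<omega>. X (3 - i) l \<omega> * Z \<omega>) \<in> borel_measurable (N m)" if "l \<in> {1..m}" for l
    using X_measN[OF i3, of l m] that Z by auto
  have term_int: "integrable M (\<lambda>\<omega>. ?I l \<omega> * (X (3 - i) l \<omega> * Z \<omega>))" for l
  proof (rule int_bound[where B=K])
    show "(\<lambda>\<omega>. ?I l \<omega> * (X (3 - i) l \<omega> * Z \<omega>)) \<in> borel_measurable M" by measurable
    fix \<omega> assume "\<omega> \<in> space M"
    then show "\<bar>?I l \<omega> * (X (3 - i) l \<omega> * Z \<omega>)\<bar> \<le> K"
      using XZb[of \<omega> l] by (auto simp: indicator_def)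
  qed
  have "(\<integral>\<omega>. X i (Suc m) \<omega> * Z \<omega> \<partial>M) = (\<integral>\<omega>. s * (\<Sum>l=1..m. ?I l \<omega> * (X (3 - i) l \<omega> * Z \<omega>)) \<partial>M)"
    by (rule integral_cong_AE[OF _ _ AE1]) measurable
  also have "\<dots> = s * (\<Sum>l=1..m. (\<integral>\<omega>. ?I l \<omega> * (X (3 - i) l \<omega> * Z \<omega>) \<partial>M))"
    unfolding integral_mult_right_zero by (rule arg_cong[where f="\<lambda>x. s * x"], rule Bochner_Integration.integral_sum[OF term_int])
  also have "\<dots> = s * (\<Sum>l=1..m. 1 / real m * (\<integral>\<omega>. X (3 - i) l \<omega> * Z \<omega> \<partial>M))"
  proof (intro arg_cong[where f="\<lambda>x. s * x"] sum.cong refl)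
    fix l assume l: "l \<in> {1..m}"
    show "(\<integral>\<omega>. ?I l \<omega> * (X (3 - i) l \<omega> * Z \<omega>) \<partial>M) = 1 / real m * (\<integral>\<omega>. X (3 - i) l \<omega> * Z \<omega> \<partial>M)"
      using indep_int[OF i3 m XZN[OF l], of K l] XZb prob_clamp[OF i3 m l] by simp
  qed
  also have "\<dots> = s / real m * (\<Sum>l=1..m. \<integral>\<omega>. X (3 - i) l \<omega> * Z \<omega> \<partial>M)"
    by (simp add: sum_distrib_left)
  finally show ?thesis .
qed

end

context TE begin

definition W :: "nat \<Rightarrow> 'a \<Rightarrow> real" where
  "W n \<omega> = (S 1 n \<omega> + s * S 2 n \<omega>) / real n"

lemma int_prod:
  fixes f g :: "'a \<Rightarrow> real"
  assumes "f \<in> borel_measurable M" "g \<in> borel_measurable M"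
    "\<And>\<omega>. \<omega> \<in> space M \<Longrightarrow> \<bar>f \<omega>\<bar> \<le> B1" "\<And>\<omega>. \<omega> \<in> space M \<Longrightarrow> \<bar>g \<omega>\<bar> \<le> B2"
  shows "integrable M (\<lambda>\<omega>. f \<omega> * g \<omega>)"
proof (rule int_bound[where B="B1 * B2"])
  show "(\<lambda>\<omega>. f \<omega> * g \<omega>) \<in> borel_measurable M" using assms by measurable
  fix \<omega> assume w: "\<omega> \<in> space M"
  have "\<bar>f \<omega>\<bar> * \<bar>g \<omega>\<bar> \<le> B1 * B2"
    by (rule mult_mono) (use assms(3,4)[OF w] in auto)
  then show "\<bar>f \<omega> * g \<omega>\<bar> \<le> B1 * B2" by (simp add: abs_mult)
qed

lemma S_meas: "i \<in> {1,2} \<Longrightarrow> S i n \<in> borel_measurable M"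
  unfolding S_def[abs_def] using X_meas by measurable

lemma S_measN: "i \<in> {1,2} \<Longrightarrow> n \<le> m \<Longrightarrow> S i n \<in> borel_measurable (N m)"
  unfolding S_def[abs_def] by (intro borel_measurable_sum X_measN) auto

lemma S_bound: "i \<in> {1,2} \<Longrightarrow> \<bar>S i n \<omega>\<bar> \<le> real n"
proof -
  assume i: "i \<in> {1,2}"
  have "\<bar>S i n \<omega>\<bar> \<le> (\<Sum>k=1..n. \<bar>X i k \<omega>\<bar>)" unfolding S_def by (rule sum_abs)
  also have "\<dots> \<le> (\<Sum>k=1..n. 1)" by (rule sum_mono) (rule X_bound[OF i])
  finally show ?thesis by simp
qed

lemma S_Suc: "S i (Suc m) \<omega> = S i m \<omega> + X i (Suc m) \<omega>"
  unfolding S_def by simp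

lemma abs_s: "\<bar>s\<bar> = 1" using s by auto
lemma ss: "s * s = 1" using s by auto

lemma W_bound: "\<bar>W n \<omega>\<bar> \<le> 2"
proof (cases "n = 0")
  case True then show ?thesis by (simp add: W_def)
next
  case False
  have "\<bar>S 1 n \<omega> + s * S 2 n \<omega>\<bar> \<le> \<bar>S 1 n \<omega>\<bar> + \<bar>S 2 n \<omega>\<bar>"
    using abs_triangle_ineq[of "S 1 n \<omega>" "s * S 2 n \<omega>"] by (simp add: abs_mult abs_s)
  also have "\<dots> \<le> 2 * real n" using S_bound[of 1 n \<omega>] S_bound[of 2 n \<omega>] by simp
  finally show ?thesis using False by (simp add: W_def divide_le_eq abs_div)
qed

lemma W_meas: "W n \<in> borel_measurable M"
  unfolding W_def[abs_def] using S_meas[of 1 n] S_meas[of 2 n] by measurable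

lemma W_measN: "n \<le> m \<Longrightarrow> W n \<in> borel_measurable (N m)"
  unfolding W_def[abs_def] using S_measN[of 1 n m] S_measN[of 2 n m] by measurable

lemma sumX_int:
  assumes i: "i \<in> {1,2}" and Zm: "Z \<in> borel_measurable M" and Zb: "\<And>\<omega>. \<omega> \<in> space M \<Longrightarrow> \<bar>Z \<omega>\<bar> \<le> K"
  shows "(\<Sum>l=1..m. \<integral>\<omega>. X i l \<omega> * Z \<omega> \<partial>M) = (\<integral>\<omega>. S i m \<omega> * Z \<omega> \<partial>M)"
proof -
  have "(\<Sum>l=1..m. \<integral>\<omega>. X i l \<omega> * Z \<omega> \<partial>M) = (\<integral>\<omega>. (\<Sum>l=1..m. X i l \<omega> * Z \<omega>) \<partial>M)"
    by (rule Bochner_Integration.integral_sum[symmetric], rule int_prod[OF X_meas[OF i] Zm X_bound[OF i] Zb])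
  also have "\<dots> = (\<integral>\<omega>. S i m \<omega> * Z \<omega> \<partial>M)" by (simp add: S_def sum_distrib_right)
  finally show ?thesis .
qed

lemma W_step:
  assumes m: "1 \<le> m" and Z: "Z \<in> borel_measurable (N m)"
    and Zb: "\<And>\<omega>. \<omega> \<in> space M \<Longrightarrow> \<bar>Z \<omega>\<bar> \<le> K"
  shows "(\<integral>\<omega>. W (Suc m) \<omega> * Z \<omega> \<partial>M) = (\<integral>\<omega>. W m \<omega> * Z \<omega> \<partial>M)"
proof -
  have Zm: "Z \<in> borel_measurable M" by (rule measurable_from_subalg[OF subalg_N Z])
  define A where "A = (\<integral>\<omega>. S 1 m \<omega> * Z \<omega> \<partial>M)"
  define B where "B = (\<integral>\<omega>. S 2 m \<omega> * Z \<omega> \<partial>M)"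
  have h1: "(\<integral>\<omega>. X 1 (Suc m) \<omega> * Z \<omega> \<partial>M) = s / real m * B"
  proof -
    have "(\<integral>\<omega>. X 1 (Suc m) \<omega> * Z \<omega> \<partial>M) = s / real m * (\<Sum>l=1..m. \<integral>\<omega>. X (3 - 1) l \<omega> * Z \<omega> \<partial>M)"
      by (rule core[OF _ m Z Zb]) simp
    also have "(\<Sum>l=1..m. \<integral>\<omega>. X (3 - 1) l \<omega> * Z \<omega> \<partial>M) = (\<Sum>l=1..m. \<integral>\<omega>. X 2 l \<omega> * Z \<omega> \<partial>M)"
      by simp
    also have "\<dots> = B" unfolding B_def by (rule sumX_int[OF _ Zm Zb]) simp
    finally show ?thesis .
  qed
  have h2: "(\<integral>\<omega>. X 2 (Suc m) \<omega> * Z \<omega> \<partial>M) = s / real m * A"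
    using core[of 2 m Z K] m Z Zb sumX_int[of 1 Z K m] Zm by (simp add: A_def)
  have iS1: "integrable M (\<lambda>\<omega>. S 1 m \<omega> * Z \<omega>)" by (rule int_prod[OF S_meas Zm S_bound Zb]) auto
  have iS2: "integrable M (\<lambda>\<omega>. S 2 m \<omega> * Z \<omega>)" by (rule int_prod[OF S_meas Zm S_bound Zb]) auto
  have iX1: "integrable M (\<lambda>\<omega>. X 1 (Suc m) \<omega> * Z \<omega>)" by (rule int_prod[OF X_meas Zm X_bound Zb]) auto
  have iX2: "integrable M (\<lambda>\<omega>. X 2 (Suc m) \<omega> * Z \<omega>)" by (rule int_prod[OF X_meas Zm X_bound Zb]) auto
  have eq1: "(\<lambda>\<omega>. W (Suc m) \<omega> * Z \<omega>) = (\<lambda>\<omega>. (1 / real (Suc m)) *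
      ((S 1 m \<omega> * Z \<omega> + X 1 (Suc m) \<omega> * Z \<omega>) + (s * (S 2 m \<omega> * Z \<omega>) + s * (X 2 (Suc m) \<omega> * Z \<omega>))))"
    by (rule ext) (simp add: W_def S_Suc field_simps)
  have "(\<integral>\<omega>. W (Suc m) \<omega> * Z \<omega> \<partial>M) = 1 / real (Suc m) * ((A + s / real m * B) + (s * B + s * (s / real m * A)))"
    unfolding eq1 integral_mult_right_zero
    by (subst Bochner_Integration.integral_add, (intro Bochner_Integration.integrable_add integrable_mult_right iS1 iS2 iX1 iX2)+,
        subst Bochner_Integration.integral_add, (intro iS1 iX1)+,
        subst Bochner_Integration.integral_add, (intro integrable_mult_right iS2 iX2)+)
       (simp only: h1 h2 integral_mult_right_zero A_def[symmetric] B_def[symmetric])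
  also have "\<dots> = (A + s * B) / real m"
  proof -
    have m0: "real m \<noteq> 0" "real m + 1 \<noteq> 0" using m by auto
    have ss': "s * (s * x) = x" for x using ss by (simp add: mult.assoc[symmetric])
    have e: "s * (s / real m * A) = A / real m" using ss' by simp
    have "(A + s / real m * B) + (s * B + s * (s / real m * A)) = (A + s * B) * ((real m + 1) / real m)"
      unfolding e using m0 by (simp add: field_simps)
    moreover have "1 / real (Suc m) * ((A + s * B) * ((real m + 1) / real m)) = (A + s * B) / real m"
      using m0 by (simp add: divide_simps)
    ultimately show ?thesis by simp
  qed
  also have "\<dots> = (\<integral>\<omega>. W m \<omega> * Z \<omega> \<partial>M)"
  proof -
    have "(\<lambda>\<omega>. W m \<omega> * Z \<omega>) = (\<lambda>\<omega>. (S 1 m \<omega> * Z \<omega> + s * (S 2 m \<omega> * Z \<omega>)) / real m)"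
      by (rule ext) (simp add: W_def field_simps)
    then show ?thesis
      unfolding A_def B_def by (simp only: integral_divide_zero Bochner_Integration.integral_add[OF iS1 integrable_mult_right[OF iS2]] integral_mult_right_zero)
  qed
  finally show ?thesis .
qed

end

context TE begin

definition gensF :: "nat \<Rightarrow> 'a set set" where
  "gensF n = (\<Union>i\<in>{1,2}. \<Union>j\<in>{1..n}. {X i j -` A \<inter> space M | A. A \<in> sets borel})"

lemma gensF_sub: "gensF n \<subseteq> Pow (space M)" unfolding gensF_def by auto

lemma F_eq: "F n = sigma (space M) (gensF n)" unfolding F_def gensF_def ..

lemma space_F[simp]: "space (F n) = space M"
  unfolding F_eq by (rule space_measure_of) (rule gensF_sub)

lemma sets_F: "sets (F n) = sigma_sets (space M) (gensF n)"
  unfolding F_eq by (rule sets_measure_of) (rule gensF_sub)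

lemma X_measF: "i \<in> {1,2} \<Longrightarrow> j \<le> n \<Longrightarrow> X i j \<in> borel_measurable (F n)"
proof (cases "j = 0")
  case True
  have "X i 0 = (\<lambda>\<omega>. 0)" by (rule ext) (simp add: X_def)
  then show ?thesis using True by simp
next
  case False
  assume i: "i \<in> {1,2}" and j: "j \<le> n"
  show ?thesis
  proof (rule measurableI)
    fix A :: "real set" assume "A \<in> sets borel"
    then have h: "X i j -` A \<inter> space M \<in> {X i j -` A' \<inter> space M | A'. A' \<in> sets borel}" by blast
    have jj: "j \<in> {1..n}" using j False by auto
    have "X i j -` A \<inter> space M \<in> gensF n" unfolding gensF_def using i jj h by blast
    then show "X i j -` A \<inter> space (F n) \<in> sets (F n)" unfolding sets_F by auto
  qed auto
qed

lemma F_sub_N: "sets (F n) \<subseteq> sets (N n)"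
proof -
  have "gensF n \<subseteq> sets (N n)"
  proof
    fix B assume "B \<in> gensF n"
    then obtain i where i: "i \<in> {1,2}" and "B \<in> (\<Union>j\<in>{1..n}. {X i j -` A \<inter> space M | A. A \<in> sets borel})"
      unfolding gensF_def by blast
    then obtain j where j: "j \<in> {1..n}" and "B \<in> {X i j -` A \<inter> space M | A. A \<in> sets borel}"
      by blast
    then obtain A where A: "A \<in> sets borel" and B: "B = X i j -` A \<inter> space M" by blast
    have ij: "i \<in> {1,2}" "j \<le> n" "A \<in> sets borel" using i j A by auto
    show "B \<in> sets (N n)" unfolding B using measurable_sets[OF X_measN[OF ij(1,2)] ij(3)] by simp
  qed
  then have "sigma_sets (space (N n)) (gensF n) \<subseteq> sets (N n)" by (subst sigma_sets_le_sets_iff)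
  then show ?thesis unfolding sets_F space_N .
qed

lemma subalg_F: "subalgebra M (F n)"
  unfolding subalgebra_def using F_sub_N sets_N_sub by auto

lemma F_mono: "sets (F n) \<subseteq> sets (F (Suc n))"
proof -
  have "gensF n \<subseteq> gensF (Suc n)"
    unfolding gensF_def by (rule UN_mono, simp, rule UN_mono, auto)
  then show ?thesis unfolding sets_F by (rule sigma_sets_mono')
qed

lemma S_measF: "i \<in> {1,2} \<Longrightarrow> S i n \<in> borel_measurable (F n)"
  unfolding S_def[abs_def] by (intro borel_measurable_sum X_measF) auto

lemma W_measF: "W n \<in> borel_measurable (F n)"
  unfolding W_def[abs_def] using S_measF[of 1 n] S_measF[of 2 n] by measurable

lemma W_int: "integrable M (W n)"
  by (rule int_bound[OF W_meas W_bound])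

lemma W_mart: "martingale_wrt M F W"
  unfolding martingale_wrt_def
proof (intro allI impI conjI)
  fix n :: nat assume n: "1 \<le> n"
  show "subalgebra M (F n)" by (rule subalg_F)
  show "sets (F n) \<subseteq> sets (F (Suc n))" by (rule F_mono)
  show "W n \<in> borel_measurable (F n)" by (rule W_measF)
  show "integrable M (W n)" by (rule W_int)
  interpret FS: finite_measure_subalgebra M "F n"
    by unfold_locales (rule subalg_F)
  show "AE \<omega> in M. real_cond_exp M (F n) (W (Suc n)) \<omega> = W n \<omega>"
  proof (rule FS.real_cond_exp_charact[OF _ W_int W_int W_measF])
    fix A assume A: "A \<in> sets (F n)"
    then have AN: "A \<in> sets (N n)" using F_sub_N by auto
    have Z: "indicator A \<in> borel_measurable (N n)" using AN by simp
    have "(\<integral>\<omega>. W (Suc n) \<omega> * indicator A \<omega> \<partial>M) = (\<integral>\<omega>. W n \<omega> * indicator A \<omega> \<partial>M)"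
      by (rule W_step[OF n Z, of 1]) (auto simp: indicator_def)
    then show "(\<integral>\<omega>\<in>A. W (Suc n) \<omega> \<partial>M) = (\<integral>\<omega>\<in>A. W n \<omega> \<partial>M)"
      unfolding set_lebesgue_integral_def by (simp add: mult.commute)
  qed
qed

end

lemma block_exists: "1 \<le> (n::nat) \<Longrightarrow> \<exists>k. (k+1)^3 \<le> n \<and> n < (k+2)^3"
proof (induction n rule: nat_induct_at_least)
  case base
  have "(0+1::nat)^3 \<le> 1 \<and> (1::nat) < (0+2)^3" by (simp add: power3_eq_cube)
  then show ?case by blast
next
  case (Suc n)
  then obtain k where k: "(k+1)^3 \<le> n" "n < (k+2)^3" by blast
  show ?case
  proof (cases "Suc n < (k+2)^3")
    case True
    then have "(k+1)^3 \<le> Suc n \<and> Suc n < (k+2)^3" using k by linarith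
    then show ?thesis by blast
  next
    case False
    then have e: "Suc n = (k+2)^3" using k by linarith
    have lt: "(k+2)^3 < (k+3::nat)^3" by (rule power_strict_mono) simp_all
    have a: "(k+1+1)^3 = (k+2::nat)^3" by simp
    have b0: "k+1+2 = k+(3::nat)" by arith
    have b: "(k+1+2)^3 = (k+3::nat)^3" by (simp only: b0)
    have "(k+1+1)^3 \<le> Suc n \<and> Suc n < (k+1+2)^3"
      by (simp only: a b e, rule conjI[OF order_refl lt])
    then show ?thesis by blast
  qed
qed

lemma cube_gap: "real ((k+2)^3) - real ((k+1)^3) \<le> 7 * (real k + 1)^2"
proof -
  have "real ((k+2)^3) - real ((k+1)^3) = 3 * (real k + 1)^2 + 3 * (real k + 1) + 1"
    by (simp add: power3_eq_cube power2_eq_square algebra_simps)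
  also have "\<dots> \<le> 7 * (real k + 1)^2"
    by (simp add: power2_eq_square algebra_simps)
  finally show ?thesis .
qed

lemma conv_subseq:
  fixes w :: "nat \<Rightarrow> real"
  assumes osc: "\<And>m n. 1 \<le> m \<Longrightarrow> m \<le> n \<Longrightarrow> \<bar>w n - w m\<bar> \<le> 4 * (real n - real m) / real m"
    and summ: "summable (\<lambda>k. \<bar>w ((k+2)^3) - w ((k+1)^3)\<bar>)"
  shows "convergent w"
proof -
  define L where "L k = w ((k+1)^3)" for k
  define D where "D k = w ((k+2)^3) - w ((k+1)^3)" for k
  have LS: "L (Suc k) = L k + D k" for k by (simp add: L_def D_def)
  have LD: "L k = L 0 + (\<Sum>j<k. D j)" for k
    by (induction k) (simp_all add: LS)
  have "summable D" using summ unfolding D_def by (rule summable_rabs_cancel)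
  then have "convergent (\<lambda>k. \<Sum>j<k. D j)" by (simp add: summable_iff_convergent)
  then have "convergent (\<lambda>k. L 0 + (\<Sum>j<k. D j))" by (intro convergent_add convergent_const)
  then have "Cauchy L" unfolding LD[symmetric] by (simp add: Cauchy_convergent_iff)
  have blk: "\<bar>w n - L k\<bar> \<le> 28 / (real k + 1)" if "(k+1)^3 \<le> n" "n < (k+2)^3" for n k
  proof -
    have c1: "1 \<le> (k+1)^3" by simp
    have "\<bar>w n - L k\<bar> \<le> 4 * (real n - real ((k+1)^3)) / real ((k+1)^3)"
      unfolding L_def by (rule osc[OF c1 that(1)])
    also have "\<dots> \<le> 4 * (7 * (real k + 1)^2) / real ((k+1)^3)"
    proof -
      have "real n \<le> real ((k+2)^3)" using that(2) by (subst of_nat_le_iff) linarith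
      then have "real n - real ((k+1)^3) \<le> 7 * (real k + 1)^2" using cube_gap[of k] by linarith
      then show ?thesis by (intro divide_right_mono mult_left_mono) auto
    qed
    also have "\<dots> = 28 / (real k + 1)"
    proof -
      have r: "real ((k+1)^3) = (real k + 1)^3" by (simp add: add.commute)
      have c: "real k + 1 \<noteq> 0" by linarith
      show ?thesis unfolding r using c by (simp add: divide_simps power2_eq_square power3_eq_cube)
    qed
    finally show ?thesis .
  qed
  show ?thesis
    unfolding Cauchy_convergent_iff[symmetric]
  proof (rule CauchyI)
    fix e :: real assume e: "0 < e"
    obtain K1 where K1: "\<forall>m\<ge>K1. \<forall>n\<ge>K1. norm (L m - L n) < e / 3"
      using CauchyD[OF \<open>Cauchy L\<close>, of "e/3"] e by auto
    obtain K2 where K2: "inverse (real (Suc K2)) < e / 84"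
      using reals_Archimedean[of "e/84"] e by auto
    define K where "K = max K1 K2"
    have smallk: "28 / (real k + 1) < e / 3" if "k \<ge> K" for k
    proof -
      have "28 / (real k + 1) \<le> 28 * inverse (real (Suc K2))"
        using that by (simp add: K_def divide_simps)
      also have "\<dots> < 28 * (e / 84)" using K2 by simp
      finally show ?thesis by simp
    qed
    have near: "\<exists>k\<ge>K. \<bar>w n - L k\<bar> < e / 3" if "n \<ge> (K+1)^3" for n
    proof -
      have "1 \<le> n" using that order_trans[of 1 "(K+1)^3" n] by simp
      then obtain k where k: "(k+1)^3 \<le> n" "n < (k+2)^3" using block_exists by blast
      have "(K+1)^3 < (k+2)^3" using that k by simp
      then have "K + 1 < k + 2" by (rule power_less_imp_less_base) simp
      then have "k \<ge> K" by simp
      then show ?thesis using blk[OF k] smallk by (intro exI[of _ k]) force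
    qed
    show "\<exists>M. \<forall>m\<ge>M. \<forall>n\<ge>M. norm (w m - w n) < e"
    proof (intro exI[of _ "(K+1)^3"] allI impI)
      fix m n assume m: "m \<ge> (K+1)^3" and n: "n \<ge> (K+1)^3"
      obtain k where k: "k \<ge> K" "\<bar>w m - L k\<bar> < e / 3" using near[OF m] by blast
      obtain k' where k': "k' \<ge> K" "\<bar>w n - L k'\<bar> < e / 3" using near[OF n] by blast
      have "\<bar>L k - L k'\<bar> < e / 3" using K1 k(1) k'(1) by (auto simp: K_def)
      then show "norm (w m - w n) < e" using k k' unfolding real_norm_def by arith
    qed
  qed
qed

context TE begin

abbreviation T :: "nat \<Rightarrow> 'a \<Rightarrow> real" where
  "T n \<omega> \<equiv> S 1 n \<omega> + s * S 2 n \<omega>"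

lemma T_bound: "\<bar>T n \<omega>\<bar> \<le> 2 * real n"
proof -
  have "\<bar>T n \<omega>\<bar> \<le> \<bar>S 1 n \<omega>\<bar> + \<bar>S 2 n \<omega>\<bar>"
    using abs_triangle_ineq[of "S 1 n \<omega>" "s * S 2 n \<omega>"] by (simp add: abs_mult abs_s)
  also have "\<dots> \<le> 2 * real n" using S_bound[of 1 n \<omega>] S_bound[of 2 n \<omega>] by simp
  finally show ?thesis .
qed

lemma T_diff: "m \<le> n \<Longrightarrow> \<bar>T n \<omega> - T m \<omega>\<bar> \<le> 2 * (real n - real m)"
proof (induction n rule: dec_induct)
  case base then show ?case by simp
next
  case (step n)
  have "\<bar>X 1 (Suc n) \<omega> + s * X 2 (Suc n) \<omega>\<bar> \<le> \<bar>X 1 (Suc n) \<omega>\<bar> + \<bar>X 2 (Suc n) \<omega>\<bar>"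
    using abs_triangle_ineq[of "X 1 (Suc n) \<omega>" "s * X 2 (Suc n) \<omega>"] by (simp add: abs_mult abs_s)
  also have "\<dots> \<le> 2" using X_bound[of 1 "Suc n" \<omega>] X_bound[of 2 "Suc n" \<omega>] by simp
  finally have x: "\<bar>X 1 (Suc n) \<omega> + s * X 2 (Suc n) \<omega>\<bar> \<le> 2" .
  have "T (Suc n) \<omega> - T m \<omega> = (T n \<omega> - T m \<omega>) + (X 1 (Suc n) \<omega> + s * X 2 (Suc n) \<omega>)"
    by (simp add: S_Suc algebra_simps)
  then show ?case using step.IH x by simp
qed

lemma W_diff:
  assumes m: "1 \<le> m" and mn: "m \<le> n"
  shows "\<bar>W n \<omega> - W m \<omega>\<bar> \<le> 4 * (real n - real m) / real m"
proof -
  have m0: "real m > 0" "real n > 0" using m mn by auto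
  have eq: "W n \<omega> - W m \<omega> = (T n \<omega> - T m \<omega>) / real n - T m \<omega> * ((real n - real m) / (real n * real m))"
    unfolding W_def using m0 by (simp add: field_simps)
  have "\<bar>W n \<omega> - W m \<omega>\<bar> \<le> \<bar>T n \<omega> - T m \<omega>\<bar> / real n + \<bar>T m \<omega>\<bar> * ((real n - real m) / (real n * real m))"
  proof -
    have c: "(real n - real m) / (real n * real m) \<ge> 0" using m0 mn by auto
    have "\<bar>(T n \<omega> - T m \<omega>) / real n - T m \<omega> * ((real n - real m) / (real n * real m))\<bar>
       \<le> \<bar>(T n \<omega> - T m \<omega>) / real n\<bar> + \<bar>T m \<omega> * ((real n - real m) / (real n * real m))\<bar>"
      by (rule abs_triangle_ineq4)
    also have "\<dots> = \<bar>T n \<omega> - T m \<omega>\<bar> / real n + \<bar>T m \<omega>\<bar> * ((real n - real m) / (real n * real m))"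
      using c m0 mn by (simp add: abs_mult abs_divide)
    finally show ?thesis unfolding eq .
  qed
  also have "\<dots> \<le> 2 * (real n - real m) / real n + (2 * real m) * ((real n - real m) / (real n * real m))"
    using T_diff[OF mn, of \<omega>] T_bound[of m \<omega>] m0 mn
    by (intro add_mono divide_right_mono mult_right_mono) auto
  also have "\<dots> = 4 * (real n - real m) / real n" using m0 by (simp add: field_simps)
  also have "\<dots> \<le> 4 * (real n - real m) / real m"
    using m0 mn by (intro divide_left_mono) auto
  finally show ?thesis .
qed

lemma W_sq:
  assumes n: "1 \<le> n" and nm: "n \<le> m"
  shows "(\<integral>\<omega>. (W m \<omega> - W n \<omega>)^2 \<partial>M) \<le> 16 * (real m - real n) / (real n)^2"
  using nm
proof (induction m rule: dec_induct)
  case base then show ?case by simp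
next
  case (step m)
  have m: "1 \<le> m" using n step by simp
  define Z where "Z \<omega> = W m \<omega> - W n \<omega>" for \<omega>
  define d where "d \<omega> = W (Suc m) \<omega> - W m \<omega>" for \<omega>
  have Wm[measurable]: "W k \<in> borel_measurable M" for k by (rule W_meas)
  have ZN: "Z \<in> borel_measurable (N m)" unfolding Z_def[abs_def]
    using W_measN[of m m] W_measN[OF step(1)] by measurable
  have Zb: "\<bar>Z \<omega>\<bar> \<le> 4" for \<omega>
    using W_bound[of m \<omega>] W_bound[of n \<omega>] unfolding Z_def by linarith
  have db: "\<bar>d \<omega>\<bar> \<le> 4 / real n" for \<omega>
  proof -
    have "\<bar>d \<omega>\<bar> \<le> 4 * (real (Suc m) - real m) / real m" unfolding d_def by (rule W_diff[OF m]) simp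
    also have "\<dots> = 4 / real m" by simp
    also have "\<dots> \<le> 4 / real n" using n step(1) by (intro divide_left_mono) auto
    finally show ?thesis .
  qed
  have d2: "(d \<omega>)^2 \<le> 16 / (real n)^2" for \<omega>
  proof -
    have "(d \<omega>)^2 = \<bar>d \<omega>\<bar>^2" by simp
    also have "\<dots> \<le> (4 / real n)^2" by (rule power_mono[OF db]) simp
    finally show ?thesis by (simp add: power_divide)
  qed
  have Z2: "(Z \<omega>)^2 \<le> 16" for \<omega>
  proof -
    have "(Z \<omega>)^2 = \<bar>Z \<omega>\<bar>^2" by simp
    also have "\<dots> \<le> 4^2" by (rule power_mono[OF Zb]) simp
    finally show ?thesis by simp
  qed
  have Zm[measurable]: "Z \<in> borel_measurable M" unfolding Z_def[abs_def] by measurable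
  have dm[measurable]: "d \<in> borel_measurable M" unfolding d_def[abs_def] by measurable
  have iZ2: "integrable M (\<lambda>\<omega>. (Z \<omega>)^2)"
    by (rule int_bound[where B=16]) (use Z2 in auto)
  have id2: "integrable M (\<lambda>\<omega>. (d \<omega>)^2)"
    by (rule int_bound[where B="16 / (real n)^2"]) (use d2 in auto)
  have idZ: "integrable M (\<lambda>\<omega>. d \<omega> * Z \<omega>)"
    by (rule int_prod[OF dm Zm], rule db, rule Zb)
  have i1: "integrable M (\<lambda>\<omega>. W (Suc m) \<omega> * Z \<omega>)"
    by (rule int_prod[OF Wm Zm], rule W_bound, rule Zb)
  have i2: "integrable M (\<lambda>\<omega>. W m \<omega> * Z \<omega>)"
    by (rule int_prod[OF Wm Zm], rule W_bound, rule Zb)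
  have dZ0: "(\<integral>\<omega>. d \<omega> * Z \<omega> \<partial>M) = 0"
  proof -
    have "(\<integral>\<omega>. d \<omega> * Z \<omega> \<partial>M) = (\<integral>\<omega>. W (Suc m) \<omega> * Z \<omega> - W m \<omega> * Z \<omega> \<partial>M)"
      unfolding d_def by (simp add: left_diff_distrib)
    also have "\<dots> = (\<integral>\<omega>. W (Suc m) \<omega> * Z \<omega> \<partial>M) - (\<integral>\<omega>. W m \<omega> * Z \<omega> \<partial>M)"
      by (rule Bochner_Integration.integral_diff[OF i1 i2])
    also have "\<dots> = 0" using W_step[OF m ZN Zb] by simp
    finally show ?thesis .
  qed
  have "(\<integral>\<omega>. (W (Suc m) \<omega> - W n \<omega>)^2 \<partial>M) = (\<integral>\<omega>. ((Z \<omega>)^2 + 2 * (d \<omega> * Z \<omega>)) + (d \<omega>)^2 \<partial>M)"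
    by (rule Bochner_Integration.integral_cong) (auto simp: Z_def d_def power2_eq_square algebra_simps)
  also have "\<dots> = ((\<integral>\<omega>. (Z \<omega>)^2 \<partial>M) + 2 * (\<integral>\<omega>. d \<omega> * Z \<omega> \<partial>M)) + (\<integral>\<omega>. (d \<omega>)^2 \<partial>M)"
    by (simp add: Bochner_Integration.integral_add iZ2 idZ id2 Bochner_Integration.integrable_add)
  also have "\<dots> \<le> 16 * (real m - real n) / (real n)^2 + 16 / (real n)^2"
  proof -
    have "(\<integral>\<omega>. (d \<omega>)^2 \<partial>M) \<le> 16 / (real n)^2"
      by (rule integral_le_const[OF id2]) (use d2 in auto)
    moreover have "(\<integral>\<omega>. (Z \<omega>)^2 \<partial>M) \<le> 16 * (real m - real n) / (real n)^2"
      using step.IH unfolding Z_def .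
    ultimately show ?thesis using dZ0 by simp
  qed
  also have "\<dots> = 16 * (real (Suc m) - real n) / (real n)^2" by (simp add: add_divide_distrib[symmetric] algebra_simps)
  finally show ?case .
qed

lemma D_abs_int:
  "(\<integral>\<omega>. \<bar>W ((k+2)^3) \<omega> - W ((k+1)^3) \<omega>\<bar> \<partial>M) \<le> 57 / (real k + 1)^2"
proof -
  define a where "a = (k+1)^3"
  define b where "b = (k+2)^3"
  define c where "c = (real k + 1)^2"
  define D where "D \<omega> = W b \<omega> - W a \<omega>" for \<omega>
  have a1: "1 \<le> a" unfolding a_def by simp
  have ab: "a \<le> b" unfolding a_def b_def by (rule power_mono) auto
  have c1: "c \<ge> 1" unfolding c_def by simp
  have ra: "real a = (real k + 1)^3" unfolding a_def by (simp add: add.commute)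
  have ra2: "(real a)^2 = c^3" unfolding ra c_def by (simp add: power_mult[symmetric])
  have Dm[measurable]: "D \<in> borel_measurable M" unfolding D_def[abs_def] using W_meas by measurable
  have Db: "\<bar>D \<omega>\<bar> \<le> 4" for \<omega> using W_bound[of b \<omega>] W_bound[of a \<omega>] unfolding D_def by linarith
  have D2: "(D \<omega>)^2 \<le> 16" for \<omega>
  proof -
    have "(D \<omega>)^2 = \<bar>D \<omega>\<bar>^2" by simp
    also have "\<dots> \<le> 4^2" by (rule power_mono[OF Db]) simp
    finally show ?thesis by simp
  qed
  have iD2: "integrable M (\<lambda>\<omega>. (D \<omega>)^2)" by (rule int_bound[where B=16]) (use D2 in auto)
  have iD: "integrable M (\<lambda>\<omega>. \<bar>D \<omega>\<bar>)" by (rule int_bound[where B=4]) (use Db in auto)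
  have ED2: "(\<integral>\<omega>. (D \<omega>)^2 \<partial>M) \<le> 112 / c^2"
  proof -
    have "(\<integral>\<omega>. (D \<omega>)^2 \<partial>M) \<le> 16 * (real b - real a) / (real a)^2"
      unfolding D_def by (rule W_sq[OF a1 ab])
    also have "\<dots> \<le> 16 * (7 * c) / c^3"
      unfolding ra2 using cube_gap[of k] c1 unfolding a_def b_def c_def
      by (intro divide_right_mono mult_left_mono) auto
    also have "\<dots> = 112 / c^2" using c1 by (simp add: power2_eq_square power3_eq_cube)
    finally show ?thesis .
  qed
  have pw: "\<bar>D \<omega>\<bar> \<le> 1 / (2 * c) + c / 2 * (D \<omega>)^2" for \<omega>
  proof -
    have "0 \<le> (c * \<bar>D \<omega>\<bar> - 1)^2" by simp
    then have "2 * c * \<bar>D \<omega>\<bar> \<le> 1 + c^2 * (D \<omega>)^2"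
      by (simp add: power2_eq_square algebra_simps)
    then show ?thesis using c1 by (simp add: field_simps power2_eq_square)
  qed
  have "(\<integral>\<omega>. \<bar>D \<omega>\<bar> \<partial>M) \<le> (\<integral>\<omega>. 1 / (2 * c) + c / 2 * (D \<omega>)^2 \<partial>M)"
    by (rule integral_mono[OF iD]) (use iD2 pw in auto)
  also have "\<dots> = 1 / (2 * c) + c / 2 * (\<integral>\<omega>. (D \<omega>)^2 \<partial>M)"
    using iD2 by (simp add: prob_space)
  also have "\<dots> \<le> 1 / (2 * c) + c / 2 * (112 / c^2)"
    using ED2 c1 by (intro add_left_mono mult_left_mono) auto
  also have "\<dots> \<le> 57 / c" using c1 by (simp add: field_simps power2_eq_square)
  finally show ?thesis unfolding D_def a_def b_def c_def .
qed

lemma summable_57: "summable (\<lambda>k. 57 / (real k + 1)^2)"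
proof -
  have "summable (\<lambda>n. inverse (real n ^ 2))" by (rule inverse_power_summable) simp
  then have "summable (\<lambda>n. inverse (real (Suc n) ^ 2))" by (subst summable_Suc_iff)
  then have "summable (\<lambda>n. 57 * inverse (real (Suc n) ^ 2))" by (rule summable_mult)
  then show ?thesis by (simp add: divide_inverse add.commute)
qed

lemma AE_summ: "AE \<omega> in M. summable (\<lambda>k. \<bar>W ((k+2)^3) \<omega> - W ((k+1)^3) \<omega>\<bar>)"
proof -
  define f where "f k \<omega> = \<bar>W ((k+2)^3) \<omega> - W ((k+1)^3) \<omega>\<bar>" for k \<omega>
  have fm[measurable]: "f k \<in> borel_measurable M" for k unfolding f_def[abs_def] using W_meas by measurable
  have fi: "integrable M (f k)" for k
  proof (rule int_bound[where B=4])
    fix \<omega>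
    show "\<bar>f k \<omega>\<bar> \<le> 4"
      using W_bound[of "(k+2)^3" \<omega>] W_bound[of "(k+1)^3" \<omega>]
        abs_triangle_ineq4[of "W ((k+2)^3) \<omega>" "W ((k+1)^3) \<omega>"] unfolding f_def abs_abs by linarith
  qed simp
  have "(\<integral>\<^sup>+\<omega>. (\<Sum>k. ennreal (f k \<omega>)) \<partial>M) = (\<Sum>k. \<integral>\<^sup>+\<omega>. ennreal (f k \<omega>) \<partial>M)"
    by (rule nn_integral_suminf) simp
  also have "\<dots> = (\<Sum>k. ennreal (\<integral>\<omega>. f k \<omega> \<partial>M))"
    by (intro suminf_cong nn_integral_eq_integral fi) (auto simp: f_def)
  also have "\<dots> \<le> (\<Sum>k. ennreal (57 / (real k + 1)^2))"
  proof (rule suminf_le)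
    fix k show "ennreal (\<integral>\<omega>. f k \<omega> \<partial>M) \<le> ennreal (57 / (real k + 1)^2)"
      unfolding f_def by (rule ennreal_leI[OF D_abs_int])
  qed (rule summableI)+
  also have "\<dots> < \<infinity>"
  proof -
    have "(\<Sum>k. ennreal (57 / (real k + 1)^2)) \<noteq> \<top>" by (rule ennreal_suminf_neq_top[OF summable_57]) simp
    then show ?thesis unfolding infinity_ennreal_def by (rule less_top[THEN iffD1])
  qed
  finally have "(\<integral>\<^sup>+\<omega>. (\<Sum>k. ennreal (f k \<omega>)) \<partial>M) \<noteq> \<infinity>" by simp
  then have "AE \<omega> in M. (\<Sum>k. ennreal (f k \<omega>)) \<noteq> \<infinity>"
    by (intro nn_integral_PInf_AE) auto
  then show ?thesis
  proof (eventually_elim)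
    case (elim \<omega>)
    then have "summable (\<lambda>k. f k \<omega>)" by (intro summable_suminf_not_top) (auto simp: f_def)
    then show ?case by (simp add: f_def)
  qed
qed

lemma W_conv: "AE \<omega> in M. convergent (\<lambda>n. W n \<omega>)"
  using AE_summ
proof (eventually_elim)
  case (elim \<omega>)
  show ?case
    by (rule conv_subseq[OF W_diff elim])
qed

end

lemma beta_app:
  fixes Tf Df yy ee :: "nat \<Rightarrow> real" and beta :: "nat \<Rightarrow> real"
  assumes TD: "\<And>n. Tf (Suc n) = Tf n + Df (Suc n)"
    and yy: "\<And>n. yy n = Tf n / real n"
    and ee: "\<And>j. ee (Suc j) = 1 / 2 * (Df (Suc j) + yy j)"
    and bb: "\<And>n. beta n = 2 / (real n * (real n - 1))"
  shows "\<forall>n\<ge>2. yy n = beta n * (yy 2 + (\<Sum>j=2..n-1. real j * ee (Suc j)))"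
proof (intro allI impI)
  fix n :: nat assume n: "2 \<le> n"
  have "Tf n / real n = 2 / (real n * (real n - 1)) *
           (Tf 2 / 2 + (\<Sum>j=2..n-1. real j * (1 / 2 * (Df (Suc j) + Tf j / real j))))"
    by (rule beta_identity[of Tf Df n, OF TD n])
  then show "yy n = beta n * (yy 2 + (\<Sum>j=2..n-1. real j * ee (Suc j)))"
    by (simp add: yy ee bb)
qed

theorem lemma3p3:
  fixes M :: "'a measure" and p :: "nat \<Rightarrow> real"
    and xi :: "nat \<Rightarrow> nat \<Rightarrow> 'a \<Rightarrow> bool" and u :: "nat \<Rightarrow> nat \<Rightarrow> 'a \<Rightarrow> nat"
    and a :: "nat \<Rightarrow> real"
    and X :: "nat \<Rightarrow> nat \<Rightarrow> 'a \<Rightarrow> real" and S :: "nat \<Rightarrow> nat \<Rightarrow> 'a \<Rightarrow> real"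
    and F :: "nat \<Rightarrow> 'a measure"
    and x y eps_x eps_y :: "nat \<Rightarrow> 'a \<Rightarrow> real"
    and beta :: "nat \<Rightarrow> real"
  assumes M: "prob_space M"
    and p: "\<forall>i\<in>{1,2}. 0 \<le> p i \<and> p i \<le> 1"
    and a: "\<forall>i\<in>{1,2}. a i \<in> {-1, 1}"
    and indep: "prob_space.indep_vars M (\<lambda>_. count_space UNIV)
        (\<lambda>k \<omega>. case k of (True, i, n) \<Rightarrow> Inl (xi i n \<omega>) | (False, i, n) \<Rightarrow> Inr (u i n \<omega>))
        (({True} \<times> {1,2} \<times> {2..}) \<union> ({False} \<times> {1,2} \<times> {1..}))"
    and xi_distr: "\<forall>i\<in>{1,2}. \<forall>n\<ge>2.
        distr M (count_space UNIV) (xi i n) = measure_pmf (bernoulli_pmf (p i))"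
    and u_distr: "\<forall>i\<in>{1,2}. \<forall>n\<ge>1.
        distr M (count_space UNIV) (u i n) = measure_pmf (pmf_of_set {1..n})"
    and X_def: "\<And>i n \<omega>. X i n \<omega> = ew (\<lambda>i n. xi i n \<omega>) (\<lambda>i n. u i n \<omega>) a i n"
    and S_def: "\<And>i n \<omega>. S i n \<omega> = (\<Sum>k=1..n. X i k \<omega>)"
    and F_def: "\<And>n. F n = sigma (space M)
        (\<Union>i\<in>{1,2}. \<Union>j\<in>{1..n}. {X i j -` A \<inter> space M | A. A \<in> sets borel})"
    and x_def: "\<And>n \<omega>. x n \<omega> =
        (S 1 n \<omega> - r_alpha (2 * p 1 - 1) (2 * p 2 - 1) * S 2 n \<omega>) / real n"
    and y_def: "\<And>n \<omega>. y n \<omega> =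
        (S 1 n \<omega> + r_alpha (2 * p 1 - 1) (2 * p 2 - 1) * S 2 n \<omega>) / real n"
    and eps_x_def: "\<And>j \<omega>. eps_x (Suc j) \<omega> =
        1 / (1 + lam_alpha (2 * p 1 - 1) (2 * p 2 - 1)) *
        (X 1 (Suc j) \<omega> - r_alpha (2 * p 1 - 1) (2 * p 2 - 1) * X 2 (Suc j) \<omega>
          + lam_alpha (2 * p 1 - 1) (2 * p 2 - 1) * x j \<omega>)"
    and eps_y_def: "\<And>j \<omega>. eps_y (Suc j) \<omega> =
        1 / (1 - lam_alpha (2 * p 1 - 1) (2 * p 2 - 1)) *
        (X 1 (Suc j) \<omega> + r_alpha (2 * p 1 - 1) (2 * p 2 - 1) * X 2 (Suc j) \<omega>
          - lam_alpha (2 * p 1 - 1) (2 * p 2 - 1) * y j \<omega>)"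
    and beta_def: "\<And>n. beta n = 2 / (real n * (real n - 1))"
  shows
    "(2 * p 1 - 1 = -1 \<and> 2 * p 2 - 1 = -1 \<longrightarrow>
        martingale_wrt M F x
      \<and> (\<exists>B. \<forall>n\<ge>1. \<forall>\<omega>\<in>space M. \<bar>x n \<omega>\<bar> \<le> B)
      \<and> (AE \<omega> in M. convergent (\<lambda>n. x n \<omega>))
      \<and> (\<forall>n\<ge>2. \<forall>\<omega>\<in>space M.
            y n \<omega> = beta n * (y 2 \<omega> + (\<Sum>j=2..n-1. real j * eps_y (Suc j) \<omega>))))
   \<and> (2 * p 1 - 1 = 1 \<and> 2 * p 2 - 1 = 1 \<longrightarrow>
        martingale_wrt M F y
      \<and> (\<exists>B. \<forall>n\<ge>1. \<forall>\<omega>\<in>space M. \<bar>y n \<omega>\<bar> \<le> B)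
      \<and> (AE \<omega> in M. convergent (\<lambda>n. y n \<omega>))
      \<and> (\<forall>n\<ge>2. \<forall>\<omega>\<in>space M.
            x n \<omega> = beta n * (x 2 \<omega> + (\<Sum>j=2..n-1. real j * eps_x (Suc j) \<omega>))))"
proof -
  have r1: "r_alpha (-1) (-1) = 1" "r_alpha 1 1 = 1" by (simp_all add: r_alpha_def)
  have l1: "lam_alpha (-1) (-1) = -1" "lam_alpha 1 1 = 1" by (simp_all add: lam_alpha_def)
  have SS: "S i (Suc n) \<omega> = S i n \<omega> + X i (Suc n) \<omega>" for i n \<omega> by (simp add: S_def)
  show ?thesis
  proof (intro conjI impI)
    assume h: "2 * p 1 - 1 = -1 \<and> 2 * p 2 - 1 = -1"
    have ra: "r_alpha (2 * p 1 - 1) (2 * p 2 - 1) = 1" by (simp only: h[THEN conjunct1] h[THEN conjunct2] r1(1))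
    have la: "lam_alpha (2 * p 1 - 1) (2 * p 2 - 1) = -1" by (simp only: h[THEN conjunct1] h[THEN conjunct2] l1(1))
    from h have p0: "p 1 = 0" "p 2 = 0" by auto
    have xd: "\<forall>i\<in>{1,2}. \<forall>n\<ge>2. distr M (count_space UNIV) (xi i n) = measure_pmf (bernoulli_pmf ((-1 + 1) / 2))"
      using xi_distr p0 by auto
    interpret T: TE M xi u a X S F "-1"
      by (intro TE.intro[OF M] TE_axioms.intro[OF _ a indep xd u_distr X_def S_def F_def]) simp
    have xW: "x = T.W" unfolding fun_eq_iff x_def ra T.W_def by simp
    show "martingale_wrt M F x" unfolding xW by (rule T.W_mart)
    show "\<exists>B. \<forall>n\<ge>1. \<forall>\<omega>\<in>space M. \<bar>x n \<omega>\<bar> \<le> B" unfolding xW using T.W_bound by blast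
    show "AE \<omega> in M. convergent (\<lambda>n. x n \<omega>)" unfolding xW by (rule T.W_conv)
    show "\<forall>n\<ge>2. \<forall>\<omega>\<in>space M. y n \<omega> = beta n * (y 2 \<omega> + (\<Sum>j=2..n-1. real j * eps_y (Suc j) \<omega>))"
    proof (intro allI impI ballI)
      fix n :: nat and \<omega> assume n: "2 \<le> n"
      have "\<forall>n\<ge>2. y n \<omega> = beta n * (y 2 \<omega> + (\<Sum>j=2..n-1. real j * eps_y (Suc j) \<omega>))"
      proof (rule beta_app[where Tf="\<lambda>n. S 1 n \<omega> + S 2 n \<omega>" and Df="\<lambda>n. X 1 n \<omega> + X 2 n \<omega>"])
        show "S 1 (Suc k) \<omega> + S 2 (Suc k) \<omega> = S 1 k \<omega> + S 2 k \<omega> + (X 1 (Suc k) \<omega> + X 2 (Suc k) \<omega>)" for k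
          by (simp add: SS)
        show "y k \<omega> = (S 1 k \<omega> + S 2 k \<omega>) / real k" for k unfolding y_def ra by simp
        show "eps_y (Suc j) \<omega> = 1 / 2 * (X 1 (Suc j) \<omega> + X 2 (Suc j) \<omega> + y j \<omega>)" for j
          unfolding eps_y_def ra la by simp
        show "beta k = 2 / (real k * (real k - 1))" for k by (rule beta_def)
      qed
      then show "y n \<omega> = beta n * (y 2 \<omega> + (\<Sum>j=2..n-1. real j * eps_y (Suc j) \<omega>))" using n by blast
    qed
  next
    assume h: "2 * p 1 - 1 = 1 \<and> 2 * p 2 - 1 = 1"
    have ra: "r_alpha (2 * p 1 - 1) (2 * p 2 - 1) = 1" by (simp only: h[THEN conjunct1] h[THEN conjunct2] r1(2))
    have la: "lam_alpha (2 * p 1 - 1) (2 * p 2 - 1) = 1" by (simp only: h[THEN conjunct1] h[THEN conjunct2] l1(2))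
    from h have p0: "p 1 = 1" "p 2 = 1" by auto
    have xd: "\<forall>i\<in>{1,2}. \<forall>n\<ge>2. distr M (count_space UNIV) (xi i n) = measure_pmf (bernoulli_pmf ((1 + 1) / 2))"
      using xi_distr p0 by auto
    interpret T: TE M xi u a X S F 1
      by (intro TE.intro[OF M] TE_axioms.intro[OF _ a indep xd u_distr X_def S_def F_def]) simp
    have yW: "y = T.W" unfolding fun_eq_iff y_def ra T.W_def by simp
    show "martingale_wrt M F y" unfolding yW by (rule T.W_mart)
    show "\<exists>B. \<forall>n\<ge>1. \<forall>\<omega>\<in>space M. \<bar>y n \<omega>\<bar> \<le> B" unfolding yW using T.W_bound by blast
    show "AE \<omega> in M. convergent (\<lambda>n. y n \<omega>)" unfolding yW by (rule T.W_conv)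
    show "\<forall>n\<ge>2. \<forall>\<omega>\<in>space M. x n \<omega> = beta n * (x 2 \<omega> + (\<Sum>j=2..n-1. real j * eps_x (Suc j) \<omega>))"
    proof (intro allI impI ballI)
      fix n :: nat and \<omega> assume n: "2 \<le> n"
      have "\<forall>n\<ge>2. x n \<omega> = beta n * (x 2 \<omega> + (\<Sum>j=2..n-1. real j * eps_x (Suc j) \<omega>))"
      proof (rule beta_app[where Tf="\<lambda>n. S 1 n \<omega> - S 2 n \<omega>" and Df="\<lambda>n. X 1 n \<omega> - X 2 n \<omega>"])
        show "S 1 (Suc k) \<omega> - S 2 (Suc k) \<omega> = S 1 k \<omega> - S 2 k \<omega> + (X 1 (Suc k) \<omega> - X 2 (Suc k) \<omega>)" for k
          by (simp add: SS)
        show "x k \<omega> = (S 1 k \<omega> - S 2 k \<omega>) / real k" for k unfolding x_def ra by simp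
        show "eps_x (Suc j) \<omega> = 1 / 2 * (X 1 (Suc j) \<omega> - X 2 (Suc j) \<omega> + x j \<omega>)" for j
          unfolding eps_x_def ra la by simp
        show "beta k = 2 / (real k * (real k - 1))" for k by (rule beta_def)
      qed
      then show "x n \<omega> = beta n * (x 2 \<omega> + (\<Sum>j=2..n-1. real j * eps_x (Suc j) \<omega>))" using n by blast
    qed
  qed
qed

end
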